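(* Let $\mathcal{X}'\subseteq\mathcal{X}$ be a set of pairwise backward kinematically inseparable observations. Then there exists $u\in\Delta(\mathcal{X})$ with $\mathrm{supp}(u)=\mathcal{X}$ such that for all $x',x''\in\mathcal{X}'$, $$\forall x\in\mathcal{X},a\in\mathcal{A}:\quad\frac{T(x'\mid x,a)}{u(x')}=\frac{T(x''\mid x,a)}{u(x'')}.$$ Conversely, if this identity holds for some $u\in\Delta(\mathcal{X})$ with full support and all $x',x''\in\mathcal{X}'\subseteq\mathcal{X}$, then $\mathcal{X}'$ is a backward kinematically inseparable set.
   Context: Block MDP: horizon $H$; finite latent states $\mathcal{S}=\sqcup_h\mathcal{S}_h$; countable observations $\mathcal{X}=\sqcup_h\mathcal{X}_h$; finite actions $\mathcal{A}$; transitions $T(\cdot\mid s,a)\in\Delta(\mathcal{S}_{h+1})$ for $s\in\mathcal{S}_h$; emissions $q(\cdot\mid s)\in\Delta(\mathcal{X}_h)$ with pairwise disjoint supports, giving a decoder $g^\star$. Observation transitions: $T(x'\mid x,a)=q(x'\mid g^\star(x'))T(g^\star(x')\mid g^\star(x),a)$. For $u\in\Delta(\mathcal{X}\times\mathcal{A})$ with full support, $\mathbb{P}_u(x,a\mid x')=\frac{T(x'\mid x,a)u(x,a)}{\sum_{\tilde x,\tilde a}T(x'\mid\tilde x,\tilde a)u(\tilde x,\tilde a)}$; $x_1',x_2'$ are backward kinematically inseparable if $\mathbb{P}_u(\cdot\mid x_1')=\mathbb{P}_u(\cdot\mid x_2')$ for every full-support $u$ (an equivalence relation); a backward KI set is a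 set of pairwise backward KI observations. *)

theory Defs
  imports "HOL-Analysis.Analysis"
begin

text \<open>Block MDP. Latent states: finite type 's with level function levS (levels 1..H).
  Observations: countable type 'x. Actions: finite type 'a.
  Tl s a s' = T(s' | s, a);  q s x = q(x | s).\<close>

definition block_mdp ::
  "nat \<Rightarrow> ('s::finite \<Rightarrow> nat) \<Rightarrow> ('s \<Rightarrow> 'a::finite \<Rightarrow> 's \<Rightarrow> real)
     \<Rightarrow> ('s \<Rightarrow> 'x::countable \<Rightarrow> real) \<Rightarrow> bool" where
  "block_mdp H levS Tl q \<longleftrightarrow>
     (\<forall>s. 1 \<le> levS s \<and> levS s \<le> H) \<and>
     (\<forall>s a s'. 0 \<le> Tl s a s') \<and>
     (\<forall>s a s'. 0 < Tl s a s' \<longrightarrow> levS s' = Suc (levS s)) \<and>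
     (\<forall>s a. levS s < H \<longrightarrow> (\<Sum>s'\<in>UNIV. Tl s a s') = 1) \<and>
     (\<forall>s x. 0 \<le> q s x) \<and>
     (\<forall>s. (q s has_sum 1) UNIV) \<and>
     (\<forall>s1 s2 x. 0 < q s1 x \<and> 0 < q s2 x \<longrightarrow> s1 = s2) \<and>
     (\<forall>x. \<exists>s. 0 < q s x)"

definition decoder :: "('s \<Rightarrow> 'x \<Rightarrow> real) \<Rightarrow> 'x \<Rightarrow> 's" where
  "decoder q x = (THE s. 0 < q s x)"

text \<open>Observation transitions: obsT Tl q x' x a = T(x' | x, a).\<close>
definition obsT :: "('s \<Rightarrow> 'a \<Rightarrow> 's \<Rightarrow> real) \<Rightarrow> ('s \<Rightarrow> 'x \<Rightarrow> real) \<Rightarrow> 'x \<Rightarrow> 'x \<Rightarrow> 'a \<Rightarrow> real" where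
  "obsT Tl q x' x a = q (decoder q x') x' * Tl (decoder q x) a (decoder q x')"

definition full_support_dist :: "('b \<Rightarrow> real) \<Rightarrow> bool" where
  "full_support_dist u \<longleftrightarrow> (\<forall>z. 0 < u z) \<and> (u has_sum 1) UNIV"

definition Pback ::
  "('s \<Rightarrow> 'a \<Rightarrow> 's \<Rightarrow> real) \<Rightarrow> ('s \<Rightarrow> 'x \<Rightarrow> real) \<Rightarrow> ('x \<times> 'a \<Rightarrow> real) \<Rightarrow> 'x \<Rightarrow> 'x \<times> 'a \<Rightarrow> real" where
  "Pback Tl q u x' xa =
     obsT Tl q x' (fst xa) (snd xa) * u xa /
     (\<Sum>\<^sub>\<infinity>ya\<in>UNIV. obsT Tl q x' (fst ya) (snd ya) * u ya)"

definition backward_KI ::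
  "('s \<Rightarrow> 'a \<Rightarrow> 's \<Rightarrow> real) \<Rightarrow> ('s \<Rightarrow> 'x \<Rightarrow> real) \<Rightarrow> 'x \<Rightarrow> 'x \<Rightarrow> bool" where
  "backward_KI Tl q x1 x2 \<longleftrightarrow>
     (\<forall>u :: 'x \<times> 'a \<Rightarrow> real. full_support_dist u \<longrightarrow> Pback Tl q u x1 = Pback Tl q u x2)"

definition backward_KI_set ::
  "('s \<Rightarrow> 'a \<Rightarrow> 's \<Rightarrow> real) \<Rightarrow> ('s \<Rightarrow> 'x \<Rightarrow> real) \<Rightarrow> 'x set \<Rightarrow> bool" where
  "backward_KI_set Tl q X' \<longleftrightarrow> (\<forall>x1\<in>X'. \<forall>x2\<in>X'. backward_KI Tl q x1 x2)"

end

theory Submission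
  imports Defs
begin

lemma exists_fsd: "\<exists>u :: 'b::countable \<Rightarrow> real. full_support_dist u"
proof -
  define v :: "'b \<Rightarrow> real" where "v x = (1/2) ^ to_nat x" for x
  have g: "(\<lambda>n::nat. (1/2::real)^n) summable_on UNIV"
    by (subst summable_on_UNIV_nonneg_real_iff) (auto intro: summable_geometric)
  hence "(\<lambda>n::nat. (1/2::real)^n) summable_on range to_nat"
    by (rule summable_on_subset) auto
  hence "(\<lambda>x::'b. (1/2::real)^to_nat x) summable_on UNIV"
    by (subst (asm) summable_on_reindex) (auto simp: o_def)
  hence vs: "v summable_on UNIV" by (simp add: v_def[abs_def])
  have vp: "\<And>x. 0 < v x" by (simp add: v_def)
  define S where "S = infsum v UNIV"
  obtain x0 :: 'b where True by simp
  have "infsum v {x0} \<le> infsum v UNIV"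
    by (rule infsum_mono2) (use vs vp in \<open>auto intro: less_imp_le\<close>)
  hence Sp: "0 < S" using vp[of x0] by (simp add: S_def)
  have "((\<lambda>x. (1/S) * v x) has_sum ((1/S) * S)) UNIV"
    by (rule has_sum_cmult_right) (simp add: S_def vs)
  hence "((\<lambda>x. (1/S) * v x) has_sum 1) UNIV" using Sp by simp
  moreover have "\<forall>x. 0 < (1/S) * v x" using Sp vp by simp
  ultimately have "full_support_dist (\<lambda>x. (1/S) * v x)" unfolding full_support_dist_def by blast
  thus ?thesis by blast
qed

lemma divc: "(u::real) \<noteq> 0 \<Longrightarrow> x * u / N / u = x / N" by simp

lemma le_has_sum:
  fixes f :: "'b \<Rightarrow> real"
  assumes "(f has_sum S) UNIV" "\<And>x. 0 \<le> f x"
  shows "f x \<le> S"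
proof -
  have "infsum f {x} \<le> infsum f UNIV"
    by (rule infsum_mono2) (use assms in \<open>auto simp: has_sum_iff\<close>)
  thus ?thesis using assms by (simp add: has_sum_iff)
qed

lemma le_infsum:
  fixes f :: "'b \<Rightarrow> real"
  assumes "f summable_on UNIV" "\<And>x. 0 \<le> f x"
  shows "f x \<le> infsum f UNIV"
  using le_has_sum[OF has_sum_infsum[OF assms(1)] assms(2)] .

lemma sum_fun_summable:
  fixes q :: "'s \<Rightarrow> 'b \<Rightarrow> real"
  assumes "finite S" "\<And>s. q s summable_on UNIV"
  shows "(\<lambda>x. \<Sum>s\<in>S. q s x) summable_on UNIV"
  using assms(1)
proof induct
  case empty then show ?case by simp
next
  case (insert s F)
  then show ?case by (simp add: summable_on_add assms(2))
qed

context
  fixes H :: nat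
    and levS :: "'s::finite \<Rightarrow> nat"
    and Tl :: "'s \<Rightarrow> 'a::finite \<Rightarrow> 's \<Rightarrow> real"
    and q :: "'s \<Rightarrow> 'x::countable \<Rightarrow> real"
  assumes bm: "block_mdp H levS Tl q"
begin

lemma q_nn: "0 \<le> q s x" using bm by (simp add: block_mdp_def)
lemma Tl_nn: "0 \<le> Tl s a s'" using bm by (simp add: block_mdp_def)
lemma q_hs: "(q s has_sum 1) UNIV" using bm by (simp add: block_mdp_def)
lemma q_le1: "q s x \<le> 1" using le_has_sum[OF q_hs q_nn] .

definition TM where "TM = Max (range (\<lambda>(s,a,s'). Tl s a s'))"
lemma Tl_le: "Tl s a s' \<le> TM"
  unfolding TM_def by (rule Max_ge) (auto intro!: image_eqI[where x="(s,a,s')"])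

lemma T_nn: "0 \<le> obsT Tl q x' x a"
  by (simp add: obsT_def q_nn Tl_nn)

lemma T_le: "obsT Tl q x' x a \<le> TM"
proof -
  have "obsT Tl q x' x a \<le> 1 * TM" unfolding obsT_def
    by (rule mult_mono) (auto simp: q_le1 Tl_le Tl_nn)
  thus ?thesis by simp
qed

lemma T_summable_x: "(\<lambda>x'. obsT Tl q x' x a) summable_on UNIV"
proof (rule summable_on_comparison_test)
  show "(\<lambda>x'. TM * (\<Sum>s\<in>UNIV. q s x')) summable_on UNIV"
    by (rule summable_on_cmult_right, rule sum_fun_summable) (auto intro: has_sum_imp_summable[OF q_hs])
  fix x'
  show "0 \<le> obsT Tl q x' x a" by (rule T_nn)
  have "q (decoder q x') x' \<le> (\<Sum>s\<in>UNIV. q s x')"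
    by (rule member_le_sum) (auto simp: q_nn)
  thus "obsT Tl q x' x a \<le> TM * (\<Sum>s\<in>UNIV. q s x')" unfolding obsT_def
    by (metis Tl_le Tl_nn mult.commute mult_mono q_nn order_trans)
qed

lemma T_summable_u:
  assumes "full_support_dist (u :: 'x \<times> 'a \<Rightarrow> real)"
  shows "(\<lambda>ya. obsT Tl q x' (fst ya) (snd ya) * u ya) summable_on UNIV"
proof (rule summable_on_comparison_test)
  show "(\<lambda>ya. TM * u ya) summable_on UNIV"
    by (rule summable_on_cmult_right) (use assms in \<open>auto simp: full_support_dist_def summable_on_def\<close>)
  fix ya
  show "0 \<le> obsT Tl q x' (fst ya) (snd ya) * u ya"
    using assms T_nn[of x' "fst ya" "snd ya"] unfolding full_support_dist_def
    by (meson less_imp_le mult_nonneg_nonneg)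
  show "obsT Tl q x' (fst ya) (snd ya) * u ya \<le> TM * u ya"
    using assms T_le[of x' "fst ya" "snd ya"] unfolding full_support_dist_def
    by (meson less_imp_le mult_right_mono)
qed

lemma KI_props:
  assumes "backward_KI Tl q x1 x2"
  shows "((\<forall>y a. obsT Tl q x1 y a = 0) \<longleftrightarrow> (\<forall>y a. obsT Tl q x2 y a = 0))
     \<and> (\<forall>y a z b. obsT Tl q x1 y a * obsT Tl q x2 z b = obsT Tl q x2 y a * obsT Tl q x1 z b)"
proof -
  obtain u :: "'x \<times> 'a \<Rightarrow> real" where u: "full_support_dist u" using exists_fsd by blast
  have up: "\<And>ya. 0 < u ya" using u unfolding full_support_dist_def by blast
  define N where "N x' = (\<Sum>\<^sub>\<infinity>ya\<in>UNIV. obsT Tl q x' (fst ya) (snd ya) * u ya)" for x'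
  have Nnz: "0 < N x'" if "obsT Tl q x' y a \<noteq> 0" for x' y a
  proof -
    have "obsT Tl q x' (fst (y,a)) (snd (y,a)) * u (y,a) \<le> N x'"
      unfolding N_def by (rule le_infsum[OF T_summable_u[OF u]]) (simp add: T_nn up less_imp_le)
    moreover have "0 < obsT Tl q x' y a * u (y,a)"
      using that T_nn[of x' y a] up[of "(y,a)"] by simp
    ultimately show ?thesis by simp
  qed
  have eq: "obsT Tl q x1 y a / N x1 = obsT Tl q x2 y a / N x2" for y a
  proof -
    have "Pback Tl q u x1 (y,a) = Pback Tl q u x2 (y,a)"
      using assms u by (simp add: backward_KI_def)
    hence "obsT Tl q x1 y a * u (y,a) / N x1 = obsT Tl q x2 y a * u (y,a) / N x2"
      by (simp add: Pback_def N_def)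
    hence "(obsT Tl q x1 y a * u (y,a) / N x1) / u (y,a) = (obsT Tl q x2 y a * u (y,a) / N x2) / u (y,a)"
      by simp
    thus ?thesis using up[of "(y,a)"] divc by simp
  qed
  show ?thesis
  proof (cases "\<forall>y a. obsT Tl q x1 y a = 0")
    case True
    have z1: "\<forall>y a. obsT Tl q x2 y a = 0"
    proof (intro allI, rule ccontr)
      fix y a assume h: "obsT Tl q x2 y a \<noteq> 0"
      hence "0 < N x2" by (rule Nnz)
      moreover have "obsT Tl q x2 y a / N x2 = 0" using eq[of y a] True by simp
      ultimately show False using h by simp
    qed
    with True show ?thesis by simp
  next
    case False
    then obtain y0 a0 where "obsT Tl q x1 y0 a0 \<noteq> 0" by blast
    hence n1: "0 < N x1" by (rule Nnz)
    have nz2: "\<not> (\<forall>y a. obsT Tl q x2 y a = 0)"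
    proof
      assume "\<forall>y a. obsT Tl q x2 y a = 0"
      hence "obsT Tl q x1 y0 a0 / N x1 = 0" using eq by simp
      thus False using n1 \<open>obsT Tl q x1 y0 a0 \<noteq> 0\<close> by simp
    qed
    then obtain y1 a1 where "obsT Tl q x2 y1 a1 \<noteq> 0" by blast
    hence n2: "0 < N x2" by (rule Nnz)
    have p: "obsT Tl q x1 y a = obsT Tl q x2 y a * (N x1 / N x2)" for y a
      using eq[of y a] n1 n2 by (simp add: field_simps)
    have "\<forall>y a z b. obsT Tl q x1 y a * obsT Tl q x2 z b = obsT Tl q x2 y a * obsT Tl q x1 z b"
    proof (intro allI)
      fix y a z b
      show "obsT Tl q x1 y a * obsT Tl q x2 z b = obsT Tl q x2 y a * obsT Tl q x1 z b"
        unfolding p[of y a] p[of z b] by (simp only: mult_ac)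
    qed
    with False nz2 show ?thesis by blast
  qed
qed

lemma converse_dir:
  assumes u: "full_support_dist (u :: 'x \<Rightarrow> real)"
    and r: "\<forall>x'\<in>X'. \<forall>x''\<in>X'. \<forall>x a. obsT Tl q x' x a / u x' = obsT Tl q x'' x a / u x''"
  shows "backward_KI_set Tl q X'"
  unfolding backward_KI_set_def backward_KI_def
proof (intro ballI allI impI)
  fix x1 x2 and u' :: "'x \<times> 'a \<Rightarrow> real"
  assume x1: "x1 \<in> X'" and x2: "x2 \<in> X'" and u': "full_support_dist u'"
  have up: "0 < u x" for x using u unfolding full_support_dist_def by blast
  define c where "c = u x1 / u x2"
  have cp: "0 < c" using up[of x1] up[of x2] by (simp add: c_def)
  have p: "obsT Tl q x1 y a = c * obsT Tl q x2 y a" for y a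
  proof -
    have "obsT Tl q x1 y a / u x1 = obsT Tl q x2 y a / u x2" using r x1 x2 by blast
    thus ?thesis using up[of x1] up[of x2] by (simp add: c_def field_simps)
  qed
  show "Pback Tl q u' x1 = Pback Tl q u' x2"
  proof
    fix ya :: "'x \<times> 'a"
    have "(\<Sum>\<^sub>\<infinity>ya\<in>UNIV. obsT Tl q x1 (fst ya) (snd ya) * u' ya)
        = (\<Sum>\<^sub>\<infinity>ya\<in>UNIV. c * (obsT Tl q x2 (fst ya) (snd ya) * u' ya))"
      by (simp add: p mult.assoc)
    also have "\<dots> = c * (\<Sum>\<^sub>\<infinity>ya\<in>UNIV. obsT Tl q x2 (fst ya) (snd ya) * u' ya)"
      by (rule infsum_cmult_right')
    finally show "Pback Tl q u' x1 ya = Pback Tl q u' x2 ya"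
      unfolding Pback_def using cp by (simp add: p mult.assoc)
  qed
qed

lemma forward_dir:
  assumes ki: "backward_KI_set Tl q X'"
  shows "\<exists>u :: 'x \<Rightarrow> real. full_support_dist u \<and>
               (\<forall>x'\<in>X'. \<forall>x''\<in>X'. \<forall>x a.
                  obsT Tl q x' x a / u x' = obsT Tl q x'' x a / u x'')"
proof (cases "\<forall>x'\<in>X'. \<forall>y a. obsT Tl q x' y a = 0")
  case True
  obtain u :: "'x \<Rightarrow> real" where "full_support_dist u" using exists_fsd by blast
  thus ?thesis using True by auto
next
  case False
  then obtain xr y0 a0 where xr: "xr \<in> X'" and t0: "obsT Tl q xr y0 a0 \<noteq> 0" by blast
  have kp: "\<And>x1 x2. x1 \<in> X' \<Longrightarrow> x2 \<in> X' \<Longrightarrow>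
     ((\<forall>y a. obsT Tl q x1 y a = 0) \<longleftrightarrow> (\<forall>y a. obsT Tl q x2 y a = 0))
     \<and> (\<forall>y a z b. obsT Tl q x1 y a * obsT Tl q x2 z b = obsT Tl q x2 y a * obsT Tl q x1 z b)"
    using ki KI_props unfolding backward_KI_set_def by blast
  have pos: "0 < obsT Tl q x' y0 a0" if x': "x' \<in> X'" for x'
  proof -
    from kp[OF xr x'] t0 obtain z b where zb: "obsT Tl q x' z b \<noteq> 0" by blast
    have "obsT Tl q xr y0 a0 * obsT Tl q x' z b = obsT Tl q x' y0 a0 * obsT Tl q xr z b"
      using kp[OF xr x'] by blast
    hence "obsT Tl q x' y0 a0 \<noteq> 0" using t0 zb by auto
    thus ?thesis using T_nn[of x' y0 a0] by simp
  qed
  obtain v :: "'x \<Rightarrow> real" where v: "full_support_dist v" using exists_fsd by blast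
  have vp: "0 < v x" for x using v unfolding full_support_dist_def by blast
  have vs: "v summable_on UNIV" using v unfolding full_support_dist_def summable_on_def by blast
  define w where "w x = (if x \<in> X' then obsT Tl q x y0 a0 else v x)" for x
  have wp: "0 < w x" for x using pos vp by (simp add: w_def)
  have ws: "w summable_on UNIV"
  proof (rule summable_on_comparison_test)
    show "(\<lambda>x. obsT Tl q x y0 a0 + v x) summable_on UNIV"
      by (rule summable_on_add[OF T_summable_x vs])
    fix x show "w x \<le> obsT Tl q x y0 a0 + v x" "0 \<le> w x"
      using wp[of x] vp[of x] T_nn[of x y0 a0] by (auto simp: w_def)
  qed
  define S where "S = infsum w UNIV"
  have Sp: "0 < S" using le_infsum[OF ws, of xr] wp[of xr] wp less_imp_le unfolding S_def by (meson less_le_trans)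
  define u where "u x = (1/S) * w x" for x
  have "((\<lambda>x. (1/S) * w x) has_sum ((1/S) * S)) UNIV"
    by (rule has_sum_cmult_right) (simp add: S_def ws)
  hence "(u has_sum 1) UNIV" using Sp by (simp add: u_def[abs_def])
  moreover have "\<forall>x. 0 < u x" using Sp wp by (simp add: u_def)
  ultimately have fu: "full_support_dist u" unfolding full_support_dist_def by blast
  have "obsT Tl q x' x a / u x' = obsT Tl q x'' x a / u x''"
    if x': "x' \<in> X'" and x'': "x'' \<in> X'" for x' x'' x a
  proof -
    have e: "obsT Tl q x' x a * obsT Tl q x'' y0 a0 = obsT Tl q x'' x a * obsT Tl q x' y0 a0"
      using kp[OF x' x''] by blast
    have p1: "0 < obsT Tl q x' y0 a0" "0 < obsT Tl q x'' y0 a0" using pos x' x'' by auto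
    have "obsT Tl q x' x a / u x' = S * (obsT Tl q x' x a / obsT Tl q x' y0 a0)"
      using x' Sp p1 by (simp add: u_def w_def field_simps)
    also have "obsT Tl q x' x a / obsT Tl q x' y0 a0 = obsT Tl q x'' x a / obsT Tl q x'' y0 a0"
      using e p1 by (simp add: field_simps)
    also have "S * (obsT Tl q x'' x a / obsT Tl q x'' y0 a0) = obsT Tl q x'' x a / u x''"
      using x'' Sp p1 by (simp add: u_def w_def field_simps)
    finally show ?thesis .
  qed
  with fu show ?thesis by blast
qed

end

theorem mainTheorem5:
  fixes H :: nat
    and levS :: "'s::finite \<Rightarrow> nat"
    and Tl :: "'s \<Rightarrow> 'a::finite \<Rightarrow> 's \<Rightarrow> real"
    and q :: "'s \<Rightarrow> 'x::countable \<Rightarrow> real"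
    and X' :: "'x set"
  assumes "block_mdp H levS Tl q"
  shows "(backward_KI_set Tl q X' \<longrightarrow>
            (\<exists>u :: 'x \<Rightarrow> real. full_support_dist u \<and>
               (\<forall>x'\<in>X'. \<forall>x''\<in>X'. \<forall>x a.
                  obsT Tl q x' x a / u x' = obsT Tl q x'' x a / u x'')))
       \<and> ((\<exists>u :: 'x \<Rightarrow> real. full_support_dist u \<and>
               (\<forall>x'\<in>X'. \<forall>x''\<in>X'. \<forall>x a.
                  obsT Tl q x' x a / u x' = obsT Tl q x'' x a / u x''))
            \<longrightarrow> backward_KI_set Tl q X')"
  using forward_dir[OF assms] converse_dir[OF assms] by blast

end
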